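(* Let $T$ be a pruned tree on $\{0,1\}$, let $\psi:T\to(0;1)$, and let $(D_t)_{t\in T}$ be a compliant family with $\mu(\operatorname{Int}D_t)=\mu(\operatorname{Cl}D_t)=\psi(t)$ for all $t\in T$. Let $K_T$ and $O_T$ be the closed and open offspring of $T$ determined by $(D_t)_{t\in T}$, and write $\mathcal{D}$ for $\mathcal{D}_{K_T}=\mathcal{D}_{O_T}$. Then for all $z\in2^\omega$: if $z\notin\overline{[T]}$ then $\mathcal{D}(z)\in\{0,1\}$; and if $z=\overline{x}$ with $x\in[T]$, then $\mathcal{D}(z)$ is defined if and only if $\lim_{n\to\infty}\psi(x\restriction n)$ exists, and in that case $\mathcal{D}(z)=\lim_{n\to\infty}\psi(x\restriction n)$.
   Context: $2^{\omega}$ is the Cantor space; $N_s=\{x\in2^\omega:s\subset x\}$; $\mu$ is the coin-tossing measure, $\mu(N_s)=2^{-\mathrm{lh}(s)}$. For measurable $A$, $\mathcal{D}_A(z)=\lim_n\mu(A\cap N_{z\restriction n})/\mu(N_{z\restriction n})$ when the limit exists. $A$ is dualistic if $\mathcal{D}_A(z)$ exists and lies in $\{0,1\}$ for every $z$. A pruned tree on $\{0,1\}$ is a nonempty set of finite binary sequences closed under initial segments in which every node has a proper extension; $[T]$ is its set of infinite branches. The stretch of $s\in 2^{\le\omega}$ is $\overline{s}=s(0)^{(1)}{}^\frown s(1)^{(2)}{}^\frown s(2)^{(3)}{}^\frown\cdots$, where $i^{(k)}$ is the sequence of $k$ copies of $i$ (so $s(j)$ is repeated $j+1$ times); $\overline{X}=\{\overline{x}:x\in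 X\}$. For $n\in\omega$, $\mathrm{Fl}(n)=2^{n+1}\setminus\{0^{(n+1)},1^{(n+1)}\}$ (binary sequences of length $n+1$ that are not constant). For $s$ finite and $X\subseteq2^\omega$, $s^\frown X=\{s^\frown x:x\in X\}$. A family $(D_t)_{t\in T}$ of subsets of $2^\omega$ is compliant if each $D_t$ is dualistic, $\emptyset\ne D_t\ne2^\omega$, and $\mu(\operatorname{Int}D_t)=\mu(\operatorname{Cl}D_t)$. The closed offspring is $K_T=\overline{[T]}\cup\bigcup\{\overline{t}^\frown a^\frown\operatorname{Cl}D_t:t\in T,\ a\in\mathrm{Fl}(\mathrm{lh}\,t)\}$ and the open offspring is $O_T=\bigcup\{\overline{t}^\frown a^\frown\operatorname{Int}D_t:t\in T,\ a\in\mathrm{Fl}(\mathrm{lh}\,t)\}$; these differ by a null set so have the same density function. *)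

theory Defs
  imports "HOL-Probability.Probability"
begin

definition init :: "(nat \<Rightarrow> bool) \<Rightarrow> nat \<Rightarrow> bool list" where
  "init x n = map x [0..<n]"

definition cyl :: "bool list \<Rightarrow> (nat \<Rightarrow> bool) set" where
  "cyl s = {x. init x (length s) = s}"

definition mu :: "(nat \<Rightarrow> bool) measure" where
  "mu = PiM UNIV (\<lambda>_. measure_pmf (bernoulli_pmf (1/2)))"

text \<open>Interior and closure in the Cantor topology (basic opens are the cylinders).\<close>
definition cInt :: "(nat \<Rightarrow> bool) set \<Rightarrow> (nat \<Rightarrow> bool) set" where
  "cInt A = {x. \<exists>n. cyl (init x n) \<subseteq> A}"

definition cCl :: "(nat \<Rightarrow> bool) set \<Rightarrow> (nat \<Rightarrow> bool) set" where
  "cCl A = {x. \<forall>n. cyl (init x n) \<inter> A \<noteq> {}}"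

definition dens_seq :: "(nat \<Rightarrow> bool) set \<Rightarrow> (nat \<Rightarrow> bool) \<Rightarrow> nat \<Rightarrow> real" where
  "dens_seq A z n = measure mu (A \<inter> cyl (init z n)) / measure mu (cyl (init z n))"

definition dens_defined :: "(nat \<Rightarrow> bool) set \<Rightarrow> (nat \<Rightarrow> bool) \<Rightarrow> bool" where
  "dens_defined A z = convergent (dens_seq A z)"

definition dens :: "(nat \<Rightarrow> bool) set \<Rightarrow> (nat \<Rightarrow> bool) \<Rightarrow> real" where
  "dens A z = lim (dens_seq A z)"

definition dualistic :: "(nat \<Rightarrow> bool) set \<Rightarrow> bool" where
  "dualistic A \<longleftrightarrow> A \<in> sets mu \<and>
     (\<forall>z. dens_defined A z \<and> dens A z \<in> {0, 1})"

definition pruned_tree :: "bool list set \<Rightarrow> bool" where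
  "pruned_tree T \<longleftrightarrow> T \<noteq> {} \<and>
     (\<forall>t\<in>T. \<forall>s. prefix s t \<longrightarrow> s \<in> T) \<and>
     (\<forall>t\<in>T. \<exists>u\<in>T. strict_prefix t u)"

definition branches :: "bool list set \<Rightarrow> (nat \<Rightarrow> bool) set" where
  "branches T = {x. \<forall>n. init x n \<in> T}"

definition stretch_list :: "bool list \<Rightarrow> bool list" where
  "stretch_list s = concat (map (\<lambda>j. replicate (Suc j) (s ! j)) [0..<length s])"

definition stretch :: "(nat \<Rightarrow> bool) \<Rightarrow> (nat \<Rightarrow> bool)" where
  "stretch x = (\<lambda>m. stretch_list (init x (Suc m)) ! m)"

definition Fl :: "nat \<Rightarrow> bool list set" where
  "Fl n = {a. length a = Suc n \<and> a \<noteq> replicate (Suc n) False \<and> a \<noteq> replicate (Suc n) True}"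

definition conc :: "bool list \<Rightarrow> (nat \<Rightarrow> bool) \<Rightarrow> (nat \<Rightarrow> bool)" where
  "conc s x = (\<lambda>i. if i < length s then s ! i else x (i - length s))"

definition compliant :: "bool list set \<Rightarrow> (bool list \<Rightarrow> (nat \<Rightarrow> bool) set) \<Rightarrow> bool" where
  "compliant T D \<longleftrightarrow> (\<forall>t\<in>T. dualistic (D t) \<and> D t \<noteq> {} \<and> D t \<noteq> UNIV \<and>
      measure mu (cInt (D t)) = measure mu (cCl (D t)))"

definition closed_offspring :: "bool list set \<Rightarrow> (bool list \<Rightarrow> (nat \<Rightarrow> bool) set) \<Rightarrow> (nat \<Rightarrow> bool) set" where
  "closed_offspring T D = stretch ` branches T \<union>
     (\<Union>t\<in>T. \<Union>a\<in>Fl (length t). conc (stretch_list t @ a) ` cCl (D t))"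

definition open_offspring :: "bool list set \<Rightarrow> (bool list \<Rightarrow> (nat \<Rightarrow> bool) set) \<Rightarrow> (nat \<Rightarrow> bool) set" where
  "open_offspring T D = (\<Union>t\<in>T. \<Union>a\<in>Fl (length t). conc (stretch_list t @ a) ` cInt (D t))"

end

theory Submission
  imports Defs
begin

interpretation B: sequence_space "measure_pmf (bernoulli_pmf (1/2))"
  by unfold_locales (simp add: prob_space_measure_pmf)

lemma mu_S: "mu = B.S" by (simp add: mu_def)

lemma space_mu[simp]: "space mu = UNIV"
  by (simp add: mu_def space_PiM)

lemma sets_mu_iff: "sets mu = sets B.S" by (simp add: mu_S)

interpretation M: prob_space mu
  unfolding mu_def by (rule prob_space_PiM) (simp add: prob_space_measure_pmf)

lemma init_nth[simp]: "i < n \<Longrightarrow> init x n ! i = x i" by (simp add: init_def)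

lemma length_init[simp]: "length (init x n) = n" by (simp add: init_def)

lemma cyl_nth: "z \<in> cyl s \<longleftrightarrow> (\<forall>i<length s. z i = s ! i)"
  unfolding cyl_def list_eq_iff_nth_eq by auto

lemma cyl_emb: "cyl s = prod_emb UNIV (\<lambda>_. measure_pmf (bernoulli_pmf (1/2))) {..<length s} (PiE {..<length s} (\<lambda>j. {s!j}))"
proof -
  have "prod_emb UNIV (\<lambda>_. measure_pmf (bernoulli_pmf (1/2))) {..<length s} (PiE {..<length s} (\<lambda>j. {s!j}))
     = PiE UNIV (\<lambda>i. if i \<in> {..<length s} then {s!i} else space (measure_pmf (bernoulli_pmf (1/2))))"
    by (rule prod_emb_PiE) auto
  also have "\<dots> = cyl s"
    by (auto simp: PiE_UNIV_domain cyl_nth Pi_iff) (metis lessThan_iff singletonD)+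
  finally show ?thesis ..
qed

lemma cyl_sets[measurable]: "cyl s \<in> sets mu"
  unfolding cyl_emb mu_def by (intro sets_PiM_I) auto

lemma measure_cyl: "measure mu (cyl s) = (1/2) ^ length s"
proof -
  have "emeasure mu (cyl s) = (\<Prod>i\<in>{..<length s}. emeasure (measure_pmf (bernoulli_pmf (1/2))) {s!i})"
    unfolding cyl_emb mu_def by (rule emeasure_PiM_emb) (auto simp: prob_space_measure_pmf)
  also have "\<dots> = (\<Prod>i\<in>{..<length s}. ennreal (1/2))"
    by (intro prod.cong refl) (auto simp: emeasure_pmf_single)
  also have "\<dots> = ennreal (1/2) ^ length s" by simp
  also have "\<dots> = ennreal ((1/2) ^ length s)" by (rule ennreal_power) simp
  finally show ?thesis by (simp add: measure_def)
qed

definition shift :: "nat \<Rightarrow> (nat \<Rightarrow> bool) \<Rightarrow> (nat \<Rightarrow> bool)" where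
  "shift k z = (\<lambda>i. z (i + k))"

lemma shift_meas[measurable]: "shift k \<in> measurable mu mu"
  unfolding mu_def shift_def
  by (rule measurable_PiM_single') (auto simp: space_PiM)

lemma conc_eq_iff: "length s = length s' \<Longrightarrow> conc s w = conc s' w' \<longleftrightarrow> s = s' \<and> w = w'"
proof
  assume l: "length s = length s'" and e: "conc s w = conc s' w'"
  have "s = s'"
  proof (rule nth_equalityI)
    fix i assume "i < length s" thus "s ! i = s' ! i" using fun_cong[OF e, of i] l by (simp add: conc_def)
  qed (simp add: l)
  moreover have "w = w'"
  proof
    fix i show "w i = w' i" using fun_cong[OF e, of "i + length s"] l by (simp add: conc_def)
  qed
  ultimately show "s = s' \<and> w = w'" ..
qed auto

lemma init_conc: "init (conc s w) (length s) = s"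
  by (rule nth_equalityI) (simp_all add: init_def conc_def)

lemma conc_image: "conc s ` A = cyl s \<inter> shift (length s) -` A"
proof (intro set_eqI iffI)
  fix z assume "z \<in> conc s ` A"
  then obtain w where "w \<in> A" "z = conc s w" by auto
  moreover have "shift (length s) (conc s w) = w" by (simp add: shift_def conc_def)
  ultimately show "z \<in> cyl s \<inter> shift (length s) -` A" by (simp add: cyl_def init_conc)
next
  fix z assume z: "z \<in> cyl s \<inter> shift (length s) -` A"
  have "z = conc s (shift (length s) z)"
  proof
    fix i show "z i = conc s (shift (length s) z) i"
      using z by (auto simp: conc_def shift_def cyl_def init_def dest!: arg_cong[where f="\<lambda>l. l ! i"])
  qed
  thus "z \<in> conc s ` A" using z by auto
qed

lemma conc_sets[measurable]: "A \<in> sets mu \<Longrightarrow> conc s ` A \<in> sets mu"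
proof -
  assume A: "A \<in> sets mu"
  have "shift (length s) -` A \<in> sets mu" using measurable_sets[OF shift_meas A] by simp
  thus ?thesis unfolding conc_image by (intro sets.Int cyl_sets)
qed

lemma comb_conc: "comb_seq (length s) \<omega> \<omega>' = conc (init \<omega> (length s)) \<omega>'"
  by (auto simp: comb_seq_def conc_def init_def)

lemma emeasure_conc: assumes A: "A \<in> sets mu"
  shows "emeasure mu (conc s ` A) = emeasure mu (cyl s) * emeasure mu A"
proof -
  let ?f = "\<lambda>(\<omega>, \<omega>'). comb_seq (length s) \<omega> \<omega>'"
  have f: "?f \<in> measurable (mu \<Otimes>\<^sub>M mu) mu" unfolding mu_def by (rule measurable_comb_seq)
  have "emeasure mu (conc s ` A) = emeasure (distr (mu \<Otimes>\<^sub>M mu) mu ?f) (conc s ` A)"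
    unfolding mu_def by (subst B.PiM_comb_seq) (rule refl)
  also have "\<dots> = emeasure (mu \<Otimes>\<^sub>M mu) (?f -` (conc s ` A) \<inter> space (mu \<Otimes>\<^sub>M mu))"
    by (rule emeasure_distr[OF f]) (simp add: A conc_sets)
  also have "?f -` (conc s ` A) \<inter> space (mu \<Otimes>\<^sub>M mu) = cyl s \<times> A"
    by (auto simp: space_pair_measure comb_conc conc_eq_iff init_def cyl_def)
  also have "emeasure (mu \<Otimes>\<^sub>M mu) (cyl s \<times> A) = emeasure mu (cyl s) * emeasure mu A"
    by (rule M.emeasure_pair_measure_Times) (simp_all add: A)
  finally show ?thesis .
qed

lemma measure_conc: "A \<in> sets mu \<Longrightarrow> measure mu (conc s ` A) = (1/2) ^ length s * measure mu A"
  using emeasure_conc[of A s] by (simp add: measure_def enn2real_mult measure_cyl[symmetric])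

fun tr :: "nat \<Rightarrow> nat" where
  "tr 0 = 0" | "tr (Suc n) = tr n + Suc n"

lemma tr_mono: "m \<le> n \<Longrightarrow> tr m \<le> tr n"
  by (induction n) (auto simp: le_Suc_eq)

lemma tr_ge: "n \<le> tr n" by (induction n) auto

lemma tr_strict: "strict_mono tr"
  by (rule strict_monoI_Suc) simp

lemma tr_decomp: "i < tr n \<Longrightarrow> \<exists>j k. j < n \<and> k \<le> j \<and> i = tr j + k"
proof (induction n)
  case (Suc n)
  show ?case
  proof (cases "i < tr n")
    case True thus ?thesis using Suc.IH by (meson less_SucI)
  next
    case False thus ?thesis using Suc.prems by (intro exI[of _ n] exI[of _ "i - tr n"]) auto
  qed
qed simp

lemma tr_decomp2: "\<exists>n k. k \<le> n \<and> m = tr n + k"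
proof -
  have "m < tr (Suc m)" using tr_ge[of m] by simp
  then obtain j k where "k \<le> j" "m = tr j + k" using tr_decomp by blast
  thus ?thesis by blast
qed

lemma tr_less_cancel: "k \<le> j \<Longrightarrow> tr j + k < tr n \<Longrightarrow> j < n"
proof (rule ccontr)
  assume "k \<le> j" "tr j + k < tr n" "\<not> j < n"
  then have "tr n \<le> tr j" by (intro tr_mono) simp
  thus False using \<open>tr j + k < tr n\<close> by simp
qed

lemma tr_inj: "k \<le> j \<Longrightarrow> k' \<le> j' \<Longrightarrow> tr j + k = tr j' + k' \<Longrightarrow> j = j' \<and> k = k'"
proof -
  assume a: "k \<le> j" "k' \<le> j'" "tr j + k = tr j' + k'"
  have "\<not> j < j'"
  proof
    assume "j < j'" then have "tr (Suc j) \<le> tr j'" by (intro tr_mono) simp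
    thus False using a by simp
  qed
  moreover have "\<not> j' < j"
  proof
    assume "j' < j" then have "tr (Suc j') \<le> tr j" by (intro tr_mono) simp
    thus False using a by simp
  qed
  ultimately show ?thesis using a by simp
qed

lemma stretch_list_snoc: "stretch_list (t @ [c]) = stretch_list t @ replicate (Suc (length t)) c"
proof -
  let ?f = "\<lambda>j. replicate (Suc j) ((t @ [c]) ! j)" and ?g = "\<lambda>j. replicate (Suc j) (t ! j)"
  have 1: "map ?f [0..<length t] = map ?g [0..<length t]"
    by (rule map_cong[OF refl]) (simp add: nth_append)
  have "stretch_list (t @ [c]) = concat (map ?f [0..<length t]) @ ?f (length t)"
    by (simp add: stretch_list_def del: replicate_Suc)
  also have "\<dots> = stretch_list t @ replicate (Suc (length t)) c"
    unfolding 1 stretch_list_def by (simp del: replicate_Suc)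
  finally show ?thesis .
qed

lemma stretch_list_Nil[simp]: "stretch_list [] = []" by (simp add: stretch_list_def)

lemma length_stretch_list[simp]: "length (stretch_list t) = tr (length t)"
  by (induction t rule: rev_induct) (auto simp: stretch_list_snoc)

lemma nth_stretch_list: "j < length t \<Longrightarrow> k \<le> j \<Longrightarrow> stretch_list t ! (tr j + k) = t ! j"
proof (induction t rule: rev_induct)
  case (snoc c t)
  show ?case
  proof (cases "j < length t")
    case True
    have "tr j + k < tr (length t)" using True snoc.prems tr_mono[of "Suc j" "length t"] by simp
    thus ?thesis using snoc True by (simp add: stretch_list_snoc nth_append)
  next
    case False
    then have j: "j = length t" using snoc.prems by simp
    have "stretch_list (t @ [c]) ! (tr j + k) = replicate (Suc (length t)) c ! k"
      using j by (simp add: stretch_list_snoc nth_append del: replicate_Suc)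
    thus ?thesis using snoc.prems j by (cases k) auto
  qed
qed simp

lemma stretch_list_inj: "length s = length s' \<Longrightarrow> stretch_list s = stretch_list s' \<Longrightarrow> s = s'"
proof (rule nth_equalityI)
  fix j assume "length s = length s'" "stretch_list s = stretch_list s'" "j < length s"
  thus "s ! j = s' ! j" using nth_stretch_list[of j s 0] nth_stretch_list[of j s' 0] by simp
qed

lemma take_stretch_list: "n \<le> length t \<Longrightarrow> take (tr n) (stretch_list t) = stretch_list (take n t)"
proof (rule nth_equalityI)
  assume n: "n \<le> length t"
  show "length (take (tr n) (stretch_list t)) = length (stretch_list (take n t))"
    using n tr_mono[OF n] by (simp add: min_def)
  fix i assume "i < length (take (tr n) (stretch_list t))"
  then have i: "i < tr n" by simp
  then obtain j k where jk: "j < n" "k \<le> j" "i = tr j + k" using tr_decomp by blast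
  show "take (tr n) (stretch_list t) ! i = stretch_list (take n t) ! i"
    using jk n i by (simp add: nth_stretch_list)
qed

lemma stretch_nth: "k \<le> j \<Longrightarrow> stretch x (tr j + k) = x j"
proof -
  assume k: "k \<le> j"
  have "j < Suc (tr j + k)" using tr_ge[of j] by simp
  thus ?thesis unfolding stretch_def using nth_stretch_list[of j "init x (Suc (tr j + k))" k] k
    by simp
qed

lemma init_stretch: "init (stretch x) (tr n) = stretch_list (init x n)"
proof (rule nth_equalityI)
  show "length (init (stretch x) (tr n)) = length (stretch_list (init x n))" by (simp add: init_def)
  fix i assume "i < length (init (stretch x) (tr n))"
  then have i: "i < tr n" by (simp add: init_def)
  then obtain j k where jk: "j < n" "k \<le> j" "i = tr j + k" using tr_decomp by blast
  show "init (stretch x) (tr n) ! i = stretch_list (init x n) ! i"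
    using jk i by (simp add: nth_stretch_list stretch_nth init_def)
qed

lemma init_add: "init x (a + b) = init x a @ init (shift a x) b"
  by (rule nth_equalityI) (auto simp: nth_append shift_def)

lemma init_stretch2: "k \<le> Suc n \<Longrightarrow> init (stretch x) (tr n + k) = stretch_list (init x n) @ replicate k (x n)"
proof (rule nth_equalityI)
  assume k: "k \<le> Suc n"
  fix i assume "i < length (init (stretch x) (tr n + k))"
  then have i: "i < tr n + k" by simp
  show "init (stretch x) (tr n + k) ! i = (stretch_list (init x n) @ replicate k (x n)) ! i"
  proof (cases "i < tr n")
    case True
    have "stretch x i = init (stretch x) (tr n) ! i" using True by simp
    thus ?thesis using True i by (simp add: init_stretch nth_append)
  next
    case False
    then obtain k' where k': "i = tr n + k'" "k' < k" using i by (metis add_diff_inverse_nat nat_add_left_cancel_less)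
    thus ?thesis using k by (simp add: nth_append stretch_nth)
  qed
qed simp

lemma init_Suc: "init x (Suc n) = init x n @ [x n]" by (simp add: init_def)

lemma cyl_iff: "z \<in> cyl s \<longleftrightarrow> init z (length s) = s" by (simp add: cyl_def)

lemma init_take: "m \<le> n \<Longrightarrow> init z m = take m (init z n)"
  by (simp add: init_def take_map)

lemma cyl_app: "cyl (s @ u) \<subseteq> cyl s"
  by (auto simp: cyl_iff init_add)

lemma countable_lists: "countable (S :: bool list set)"
  by (rule countable_subset[OF subset_UNIV]) simp

lemma cInt_eq: "cInt A = (\<Union>s\<in>{s. cyl s \<subseteq> A}. cyl s)"
proof (intro set_eqI iffI)
  fix x assume "x \<in> cInt A"
  then obtain n where "cyl (init x n) \<subseteq> A" by (auto simp: cInt_def)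
  moreover have "x \<in> cyl (init x n)" by (simp add: cyl_iff)
  ultimately show "x \<in> (\<Union>s\<in>{s. cyl s \<subseteq> A}. cyl s)" by blast
next
  fix x assume "x \<in> (\<Union>s\<in>{s. cyl s \<subseteq> A}. cyl s)"
  then obtain s where "cyl s \<subseteq> A" "x \<in> cyl s" by blast
  then have "cyl (init x (length s)) \<subseteq> A" by (simp add: cyl_iff)
  thus "x \<in> cInt A" by (auto simp: cInt_def)
qed

lemma cInt_sets[measurable]: "cInt A \<in> sets mu"
  unfolding cInt_eq by (intro sets.countable_UN' countable_lists) auto

lemma cCl_eq: "cCl A = - cInt (- A)"
  by (auto simp: cCl_def cInt_def)

lemma cCl_sets[measurable]: "cCl A \<in> sets mu"
proof -
  have "space mu - cInt (-A) \<in> sets mu" by (rule sets.compl_sets) (rule cInt_sets)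
  thus ?thesis unfolding cCl_eq by (simp add: Compl_eq_Diff_UNIV)
qed

lemma cInt_sub: "cInt A \<subseteq> A"
proof
  fix x assume "x \<in> cInt A"
  then obtain n where "cyl (init x n) \<subseteq> A" by (auto simp: cInt_def)
  moreover have "x \<in> cyl (init x n)" by (simp add: cyl_iff)
  ultimately show "x \<in> A" by blast
qed

lemma cCl_sup: "A \<subseteq> cCl A"
proof
  fix x assume "x \<in> A"
  moreover have "x \<in> cyl (init x n)" for n by (simp add: cyl_iff)
  ultimately show "x \<in> cCl A" by (auto simp: cCl_def)
qed

lemma init_sets: "{z. init z m \<in> S} \<in> sets mu"
proof -
  have eq: "{z. init z m \<in> S} = (\<Union>s\<in>{s\<in>S. length s = m}. cyl s)"
    by (auto simp: cyl_iff)
  show ?thesis unfolding eq by (intro sets.countable_UN' countable_lists) auto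
qed

lemma conc_in_cyl: "conc p w \<in> cyl p" by (simp add: cyl_iff init_conc)

lemma Fl_nonconst: "a \<in> Fl n \<Longrightarrow> a \<noteq> replicate (Suc n) c"
  by (cases c) (auto simp: Fl_def)

lemma Fl_len: "a \<in> Fl n \<Longrightarrow> length a = Suc n" by (simp add: Fl_def)

lemma take_stretch_Suc: "Suc n \<le> length u \<Longrightarrow>
  take (tr (Suc n)) (stretch_list u) = stretch_list (take n u) @ replicate (Suc n) (u ! n)"
proof -
  assume n: "Suc n \<le> length u"
  have "take (tr (Suc n)) (stretch_list u) = stretch_list (take (Suc n) u)" by (rule take_stretch_list[OF n])
  also have "take (Suc n) u = take n u @ [u ! n]" using n by (simp add: take_Suc_conv_app_nth)
  also have "stretch_list (take n u @ [u ! n]) = stretch_list (take n u) @ replicate (Suc n) (u ! n)"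
    using n by (simp add: stretch_list_snoc)
  finally show ?thesis .
qed

lemma sub_lemma:
  assumes z1: "z \<in> cyl (stretch_list t @ a)" and a: "a \<in> Fl (length t)"
    and z2: "z \<in> cyl (stretch_list u)"
  shows "length u \<le> length t"
proof (rule ccontr)
  assume "\<not> length u \<le> length t"
  then have n: "Suc (length t) \<le> length u" by simp
  let ?n = "length t"
  have "init z (tr (Suc ?n)) = stretch_list t @ a" using z1 a by (simp add: cyl_iff Fl_len)
  moreover have "init z (tr (Suc ?n)) = take (tr (Suc ?n)) (init z (tr (length u)))"
    by (rule init_take) (rule tr_mono[OF n])
  moreover have "init z (tr (length u)) = stretch_list u" using z2 by (simp add: cyl_iff)
  moreover have "take (tr (Suc ?n)) (stretch_list u) = stretch_list (take ?n u) @ replicate (Suc ?n) (u ! ?n)"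
    by (rule take_stretch_Suc[OF n])
  ultimately have e: "stretch_list t @ a = stretch_list (take ?n u) @ replicate (Suc ?n) (u ! ?n)" by metis
  have "length (stretch_list t) = length (stretch_list (take ?n u))" using n by simp
  then have "a = replicate (Suc ?n) (u ! ?n)" using e append_eq_append_conv by blast
  thus False using Fl_nonconst[OF a] by blast
qed

lemma comparable_pieces:
  assumes z1: "z \<in> cyl (stretch_list t @ a)" and a: "a \<in> Fl (length t)"
    and z2: "z \<in> cyl (stretch_list t' @ a')" and a': "a' \<in> Fl (length t')"
  shows "t = t' \<and> a = a'"
proof -
  have "length t' \<le> length t" using sub_lemma[OF z1 a] z2 cyl_app by blast
  moreover have "length t \<le> length t'" using sub_lemma[OF z2 a'] z1 cyl_app by blast
  ultimately have l: "length t = length t'" by simp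
  have "stretch_list t @ a = stretch_list t' @ a'" using z1 z2 a a' l by (simp add: cyl_iff Fl_len)
  then have "stretch_list t = stretch_list t' \<and> a = a'" using l by simp
  thus ?thesis using stretch_list_inj l by blast
qed

lemma stretch_notin_piece:
  assumes a: "a \<in> Fl (length t)" shows "stretch y \<notin> cyl (stretch_list t @ a)"
proof
  assume z: "stretch y \<in> cyl (stretch_list t @ a)"
  have "stretch y \<in> cyl (stretch_list (init y (Suc (length t))))"
    by (simp only: cyl_iff length_stretch_list length_init init_stretch)
  from sub_lemma[OF z a this] show False by simp
qed

lemma card_bool_lists: "card {xs::bool list. length xs = n} = 2 ^ n"
  using card_lists_length_eq[of "UNIV::bool set" n] by simp

lemma Sb_char: "stretch ` branches T = (\<Inter>n. {z. init z (tr n) \<in> stretch_list ` T})"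
proof (intro set_eqI iffI)
  fix z assume "z \<in> stretch ` branches T"
  then obtain x where "x \<in> branches T" "z = stretch x" by auto
  thus "z \<in> (\<Inter>n. {z. init z (tr n) \<in> stretch_list ` T})"
    by (auto simp: init_stretch branches_def)
next
  fix z assume z: "z \<in> (\<Inter>n. {z. init z (tr n) \<in> stretch_list ` T})"
  have "\<forall>n. \<exists>t\<in>T. init z (tr n) = stretch_list t" using z by blast
  then obtain tt where tt: "\<And>n. tt n \<in> T" "\<And>n. init z (tr n) = stretch_list (tt n)" by metis
  have ltt: "length (tt n) = n" for n
    using arg_cong[OF tt(2)[of n], of length] strict_mono_eq[OF tr_strict] by simp
  define x where "x = (\<lambda>j. z (tr j))"
  have ix: "init x n = tt n" for n
  proof (rule nth_equalityI)
    fix j assume "j < length (init x n)"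
    then have j: "j < n" by simp
    have "tr j < tr n" using j strict_monoD[OF tr_strict] by blast
    then have "z (tr j) = init z (tr n) ! tr j" by (simp add: init_def)
    also have "\<dots> = tt n ! j" using nth_stretch_list[of j "tt n" 0] tt(2)[of n] ltt j by simp
    finally show "init x n ! j = tt n ! j" using j by (simp add: init_def x_def)
  qed (simp add: ltt)
  have "z = stretch x"
  proof
    fix m
    obtain j k where jk: "k \<le> j" "m = tr j + k" using tr_decomp2 by blast
    have "m < tr (Suc j)" using jk by simp
    then have "z m = init z (tr (Suc j)) ! m" by (rule init_nth[symmetric])
    also have "\<dots> = tt (Suc j) ! j" using tt(2)[of "Suc j"] jk nth_stretch_list[of j "tt (Suc j)" k] ltt by simp
    also have "\<dots> = x j" using ix[of "Suc j"] init_nth[of j "Suc j" x] by (metis lessI)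
    finally show "z m = stretch x m" using jk stretch_nth by simp
  qed
  moreover have "x \<in> branches T" using ix tt by (simp add: branches_def)
  ultimately show "z \<in> stretch ` branches T" by blast
qed

lemma Sb_sets[measurable]: "stretch ` branches T \<in> sets mu"
  unfolding Sb_char by (rule sets.countable_INT') (auto intro: init_sets)

lemma two_pow_bound: "(2::real) ^ n * (1/2) ^ tr n \<le> 2 * (1/2) ^ n"
proof -
  have t: "2 * n \<le> tr n + 1" by (induction n) auto
  have "(2::real) ^ (2 * n) \<le> 2 ^ (tr n + 1)" by (rule power_increasing[OF t]) simp
  moreover have "(2::real) ^ (2 * n) = 2 ^ n * 2 ^ n" by (simp only: mult_2 power_add)
  moreover have "(2::real) ^ (tr n + 1) = 2 * 2 ^ tr n" by simp
  ultimately have "(2::real) ^ n * 2 ^ n \<le> 2 * 2 ^ tr n" by simp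
  then show ?thesis by (simp add: power_one_over field_simps)
qed

lemma Sb_null: "stretch ` branches T \<in> null_sets mu"
proof -
  let ?S = "stretch ` branches T"
  have le: "measure mu ?S \<le> 2 * (1/2) ^ n" for n
  proof -
    let ?L = "{t::bool list. length t = n}"
    have "?S \<subseteq> (\<Union>t\<in>?L. cyl (stretch_list t))"
    proof
      fix z assume "z \<in> ?S"
      then obtain y where "z = stretch y" by blast
      then have "z \<in> cyl (stretch_list (init y n))"
        by (simp only: cyl_iff length_stretch_list length_init init_stretch)
      moreover have "init y n \<in> ?L" by simp
      ultimately show "z \<in> (\<Union>t\<in>?L. cyl (stretch_list t))" by blast
    qed
    then have "measure mu ?S \<le> measure mu (\<Union>t\<in>?L. cyl (stretch_list t))"
      by (intro M.finite_measure_mono) (auto intro!: sets.finite_UN simp: finite_list_length)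
    also have "\<dots> \<le> (\<Sum>t\<in>?L. measure mu (cyl (stretch_list t)))"
      by (rule measure_UNION_le) (auto simp: finite_list_length)
    also have "\<dots> = 2 ^ n * (1/2) ^ tr n" by (simp add: measure_cyl card_bool_lists)
    also have "\<dots> \<le> 2 * (1/2) ^ n" by (rule two_pow_bound)
    finally show ?thesis .
  qed
  have "(\<lambda>n. 2 * (1/2::real) ^ n) \<longlonglongrightarrow> 2 * 0"
    by (intro tendsto_mult tendsto_const LIMSEQ_power_zero) simp
  moreover have "\<exists>N. \<forall>n\<ge>N. measure mu ?S \<le> 2 * (1/2) ^ n" using le by blast
  ultimately have "measure mu ?S \<le> 2 * 0" by (rule LIMSEQ_le_const)
  then have "measure mu ?S = 0" using measure_nonneg[of mu ?S] by linarith
  thus ?thesis by (intro null_setsI) (simp_all add: M.emeasure_eq_measure)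
qed

lemma K_sets[measurable]: "closed_offspring T D \<in> sets mu"
  unfolding closed_offspring_def
  by (intro sets.Un Sb_sets sets.countable_UN' countable_lists) (auto intro!: conc_sets)

lemma O_sets[measurable]: "open_offspring T D \<in> sets mu"
  unfolding open_offspring_def
  by (intro sets.countable_UN' countable_lists) (auto intro!: conc_sets)

lemma dens_seq_KO:
  assumes eq: "\<forall>t\<in>T. measure mu (cInt (D t)) = measure mu (cCl (D t))"
  shows "dens_seq (closed_offspring T D) z = dens_seq (open_offspring T D) z"
proof -
  let ?K = "closed_offspring T D" and ?O = "open_offspring T D"
  let ?N = "stretch ` branches T \<union> (\<Union>t\<in>T. \<Union>a\<in>Fl (length t). conc (stretch_list t @ a) ` (cCl (D t) - cInt (D t)))"
  have pn: "conc (stretch_list t @ a) ` (cCl (D t) - cInt (D t)) \<in> null_sets mu" if "t \<in> T" for t a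
  proof -
    have "measure mu (cCl (D t) - cInt (D t)) = measure mu (cCl (D t)) - measure mu (cInt (D t))"
      by (rule M.finite_measure_Diff) (simp_all add: order_trans[OF cInt_sub cCl_sup])
    then have "measure mu (cCl (D t) - cInt (D t)) = 0" using eq that by simp
    then have "measure mu (conc (stretch_list t @ a) ` (cCl (D t) - cInt (D t))) = 0"
      by (simp add: measure_conc)
    thus ?thesis by (intro null_setsI) (simp_all add: M.emeasure_eq_measure conc_sets)
  qed
  have N: "?N \<in> null_sets mu"
    by (intro null_sets.Un Sb_null null_sets_UN' countable_lists pn)
  have sub: "?K - ?O \<subseteq> ?N"
  proof
    fix z assume z: "z \<in> ?K - ?O"
    show "z \<in> ?N"
    proof (cases "z \<in> stretch ` branches T")
      case False
      then obtain t a w where tw: "t \<in> T" "a \<in> Fl (length t)" "w \<in> cCl (D t)" "z = conc (stretch_list t @ a) w"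
        using z unfolding closed_offspring_def by blast
      moreover have "w \<notin> cInt (D t)"
      proof
        assume "w \<in> cInt (D t)"
        then have "z \<in> ?O" using tw unfolding open_offspring_def by blast
        thus False using z by blast
      qed
      ultimately show ?thesis by blast
    qed blast
  qed
  have "open_offspring T D \<subseteq> (\<Union>t\<in>T. \<Union>a\<in>Fl (length t). conc (stretch_list t @ a) ` cCl (D t))"
    unfolding open_offspring_def
    by (intro UN_mono image_mono order_trans[OF cInt_sub cCl_sup] order_refl)
  then have OK: "?O \<subseteq> ?K" unfolding closed_offspring_def by blast
  have KO: "?K = ?O \<union> (?K - ?O)" using OK by blast
  have "?K - ?O \<in> null_sets mu" by (rule null_sets_subset[OF N _ sub]) simp
  then have "(?K - ?O) \<inter> cyl (init z n) \<in> null_sets mu" for n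
    by (rule null_sets_subset) auto
  then have "measure mu (?K \<inter> cyl (init z n)) = measure mu (?O \<inter> cyl (init z n))" for n
    using measure_Un_null_set[of "?O \<inter> cyl (init z n)" mu "(?K - ?O) \<inter> cyl (init z n)"] KO
    by (metis Int_Un_distrib2 O_sets cyl_sets sets.Int)
  thus ?thesis by (simp add: dens_seq_def fun_eq_iff)
qed

lemma K_piece:
  assumes t: "t \<in> T" and a: "a \<in> Fl (length t)"
  shows "closed_offspring T D \<inter> cyl (stretch_list t @ a) = conc (stretch_list t @ a) ` cCl (D t)"
proof (intro equalityI subsetI)
  fix z assume z: "z \<in> closed_offspring T D \<inter> cyl (stretch_list t @ a)"
  then consider "z \<in> stretch ` branches T"
    | t' a' w where "t' \<in> T" "a' \<in> Fl (length t')" "w \<in> cCl (D t')" "z = conc (stretch_list t' @ a') w"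
    unfolding closed_offspring_def by blast
  then show "z \<in> conc (stretch_list t @ a) ` cCl (D t)"
  proof cases
    case 1 thus ?thesis using z stretch_notin_piece[OF a] by blast
  next
    case 2
    have "z \<in> cyl (stretch_list t' @ a')" using 2 conc_in_cyl by simp
    then have "t = t' \<and> a = a'" using comparable_pieces[of z t a t' a'] z a 2 by blast
    thus ?thesis using 2 by blast
  qed
next
  fix z assume "z \<in> conc (stretch_list t @ a) ` cCl (D t)"
  thus "z \<in> closed_offspring T D \<inter> cyl (stretch_list t @ a)"
    using t a conc_in_cyl unfolding closed_offspring_def by blast
qed

lemma K_empty:
  assumes pt: "pruned_tree T" and s: "s \<notin> T"
  shows "closed_offspring T D \<inter> cyl (stretch_list s) = {}"
proof (rule ccontr)
  assume "closed_offspring T D \<inter> cyl (stretch_list s) \<noteq> {}"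
  then obtain z where z: "z \<in> closed_offspring T D" "z \<in> cyl (stretch_list s)" by blast
  have pc: "\<And>t u. t \<in> T \<Longrightarrow> prefix u t \<Longrightarrow> u \<in> T" using pt by (auto simp: pruned_tree_def)
  from z(1) consider "z \<in> stretch ` branches T"
    | t' a' w where "t' \<in> T" "a' \<in> Fl (length t')" "w \<in> cCl (D t')" "z = conc (stretch_list t' @ a') w"
    unfolding closed_offspring_def by blast
  then show False
  proof cases
    case 1
    then obtain y where y: "y \<in> branches T" "z = stretch y" by blast
    have "stretch_list (init y (length s)) = stretch_list s"
      using z(2) y by (simp add: cyl_iff init_stretch)
    then have "init y (length s) = s" using stretch_list_inj[of "init y (length s)" s] by simp
    moreover have "init y (length s) \<in> T" using y(1) by (simp add: branches_def)
    ultimately show False using s by simp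
  next
    case 2
    have zc: "z \<in> cyl (stretch_list t' @ a')" using 2 conc_in_cyl by simp
    have l: "length s \<le> length t'" using sub_lemma[OF zc 2(2) z(2)] .
    have "init z (tr (length s)) = stretch_list s" using z(2) by (simp add: cyl_iff)
    moreover have "init z (tr (length s)) = take (tr (length s)) (stretch_list t')"
      using zc cyl_app[of "stretch_list t'" a'] tr_mono[OF l]
      by (auto simp: cyl_iff init_take[of "tr (length s)" "tr (length t')" z])
    moreover have "\<dots> = stretch_list (take (length s) t')" using l by (simp add: take_stretch_list)
    ultimately have "s = take (length s) t'" using l stretch_list_inj[of s "take (length s) t'"] by simp
    then have "s \<in> T" using pc[OF 2(1)] by (metis take_is_prefix)
    thus False using s by simp
  qed
qed

definition rel :: "(nat \<Rightarrow> bool) set \<Rightarrow> bool list \<Rightarrow> real" where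
  "rel A s = measure mu (A \<inter> cyl s) / measure mu (cyl s)"

lemma dens_seq_rel: "dens_seq A z n = rel A (init z n)"
  by (simp add: dens_seq_def rel_def)

lemma rel_alt: "rel A s = 2 ^ length s * measure mu (A \<inter> cyl s)"
  by (simp add: rel_def measure_cyl power_one_over)

lemma rel_nonneg: "0 \<le> rel A s" by (simp add: rel_alt)

lemma rel_le1: assumes "A \<in> sets mu" shows "rel A s \<le> 1"
proof -
  have "measure mu (A \<inter> cyl s) \<le> measure mu (cyl s)"
    by (intro M.finite_measure_mono) (auto simp: assms)
  moreover have "measure mu (cyl s) > 0" by (simp add: measure_cyl)
  ultimately show ?thesis by (simp add: rel_def)
qed

lemma rel_empty: "A \<inter> cyl s = {} \<Longrightarrow> rel A s = 0" by (simp add: rel_def)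

lemma cyl_Nil[simp]: "cyl [] = UNIV" by (auto simp: cyl_iff init_def)

lemma cyl_partition: "cyl p = (\<Union>u\<in>{u. length u = L}. cyl (p @ u))"
proof (intro set_eqI iffI)
  fix z assume z: "z \<in> cyl p"
  have "z \<in> cyl (p @ init (shift (length p) z) L)"
    using z by (simp add: cyl_iff init_add)
  thus "z \<in> (\<Union>u\<in>{u. length u = L}. cyl (p @ u))" by force
next
  fix z assume "z \<in> (\<Union>u\<in>{u. length u = L}. cyl (p @ u))"
  thus "z \<in> cyl p" using cyl_app by blast
qed

lemma cyl_disj: "length u = length u' \<Longrightarrow> u \<noteq> u' \<Longrightarrow> cyl (p @ u) \<inter> cyl (p @ u') = {}"
  by (auto simp: cyl_iff)

lemma measure_split:
  assumes A: "A \<in> sets mu"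
  shows "measure mu (A \<inter> cyl p) = (\<Sum>u\<in>{u. length u = L}. measure mu (A \<inter> cyl (p @ u)))"
proof -
  have "A \<inter> cyl p = (\<Union>u\<in>{u. length u = L}. A \<inter> cyl (p @ u))"
    using cyl_partition[of p L] by blast
  moreover have "measure mu (\<Union>u\<in>{u. length u = L}. A \<inter> cyl (p @ u)) = (\<Sum>u\<in>{u. length u = L}. measure mu (A \<inter> cyl (p @ u)))"
  proof (rule M.finite_measure_finite_Union)
    show "finite {u::bool list. length u = L}" by (rule finite_list_length)
    show "(\<lambda>u. A \<inter> cyl (p @ u)) ` {u. length u = L} \<subseteq> sets mu" using A by auto
    show "disjoint_family_on (\<lambda>u. A \<inter> cyl (p @ u)) {u. length u = L}"
      unfolding disjoint_family_on_def using cyl_disj by fastforce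
  qed
  ultimately show ?thesis by simp
qed

lemma rel_split:
  assumes A: "A \<in> sets mu"
  shows "rel A p = (\<Sum>u\<in>{u. length u = L}. rel A (p @ u)) / 2 ^ L"
proof -
  have "(\<Sum>u\<in>{u. length u = L}. rel A (p @ u)) = (\<Sum>u\<in>{u. length u = L}. 2 ^ (length p + L) * measure mu (A \<inter> cyl (p @ u)))"
    by (intro sum.cong refl) (simp add: rel_alt)
  also have "\<dots> = 2 ^ (length p + L) * measure mu (A \<inter> cyl p)"
    by (simp add: sum_distrib_left measure_split[OF A, of p L])
  also have "\<dots> = 2 ^ L * rel A p" by (simp add: rel_alt power_add)
  finally show ?thesis by simp
qed

lemma conc_cyl: "conc s ` C \<inter> cyl (s @ u) = conc s ` (C \<inter> cyl u)"
proof -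
  have sc: "shift (length s) (conc s w) = w" for w by (simp add: shift_def conc_def)
  have "conc s w \<in> cyl (s @ u) \<longleftrightarrow> w \<in> cyl u" for w
    using init_add[of "conc s w" "length s" "length u"] by (simp add: cyl_iff init_conc sc)
  thus ?thesis by blast
qed

lemma rel_conc:
  assumes C: "C \<in> sets mu" and eq: "A \<inter> cyl s = conc s ` C"
  shows "rel A (s @ u) = rel C u"
proof -
  have "A \<inter> cyl (s @ u) = A \<inter> cyl s \<inter> cyl (s @ u)" using cyl_app by blast
  also have "\<dots> = conc s ` (C \<inter> cyl u)" by (simp add: eq conc_cyl)
  finally have "measure mu (A \<inter> cyl (s @ u)) = (1/2) ^ length s * measure mu (C \<inter> cyl u)"
    using C by (simp add: measure_conc)
  thus ?thesis by (simp add: rel_alt power_add power_one_over)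
qed

lemma sum_special:
  fixes f :: "'a \<Rightarrow> real"
  assumes "finite U" "S \<subseteq> U" "\<And>u. u \<in> U - S \<Longrightarrow> f u = v"
  shows "sum f U = sum f S + real (card U - card S) * v"
proof -
  have "sum f U = sum f S + sum f (U - S)" using assms by (metis sum.subset_diff add.commute)
  also have "sum f (U - S) = real (card (U - S)) * v" using assms(3) by simp
  also have "card (U - S) = card U - card S" using assms by (meson card_Diff_subset finite_subset)
  finally show ?thesis .
qed

lemma rep_app_eq:
  assumes "replicate k c @ u = replicate (k + length u) b"
  shows "u = replicate (length u) b \<and> (0 < k \<longrightarrow> c = b)"
proof -
  have "replicate k c @ u = replicate k b @ replicate (length u) b" using assms by (simp add: replicate_add)
  then have "replicate k c = replicate k b \<and> u = replicate (length u) b"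
    by (subst (asm) append_eq_append_conv) simp_all
  thus ?thesis by (cases k) auto
qed

lemma Fl_mem:
  assumes len: "k + length u = Suc n"
    and nc: "u \<noteq> replicate (length u) c"
    and nc2: "0 < k \<or> u \<noteq> replicate (length u) (\<not> c)"
  shows "replicate k c @ u \<in> Fl n"
proof -
  have "replicate k c @ u \<noteq> replicate (Suc n) b" for b
  proof
    assume "replicate k c @ u = replicate (Suc n) b"
    then have e: "u = replicate (length u) b \<and> (0 < k \<longrightarrow> c = b)" using rep_app_eq len by metis
    show False
    proof (cases "b = c")
      case True thus False using e nc by simp
    next
      case False
      then have "b = (\<not> c)" by simp
      thus False using e nc2 False by blast
    qed
  qed
  thus ?thesis using len by (simp add: Fl_def)
qed

lemma alg0:
  fixes P F G p V :: real
  assumes P: "P \<ge> 2" and F: "0 \<le> F" "F \<le> 1" and G: "0 \<le> G" "G \<le> 1" and p: "0 \<le> p" "p \<le> 1"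
    and V: "V = (F + G + (P - 2) * p) / P"
  shows "\<bar>V - p\<bar> \<le> 2 / P \<and> \<bar>V - p\<bar> \<le> \<bar>F - p\<bar> + 1 / P"
proof -
  have e: "V - p = ((F - p) + (G - p)) / P" using V P by (simp add: field_simps)
  have a1: "\<bar>F - p\<bar> \<le> 1" "\<bar>G - p\<bar> \<le> 1" using F G p by auto
  have "\<bar>V - p\<bar> = \<bar>(F - p) + (G - p)\<bar> / P" using e P by simp
  also have "\<dots> \<le> (\<bar>F - p\<bar> + \<bar>G - p\<bar>) / P" using P by (intro divide_right_mono abs_triangle_ineq) simp
  finally have b: "\<bar>V - p\<bar> \<le> (\<bar>F - p\<bar> + \<bar>G - p\<bar>) / P" .
  have "(\<bar>F - p\<bar> + \<bar>G - p\<bar>) / P \<le> 2 / P" using a1 P by (intro divide_right_mono) simp_all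
  moreover have "(\<bar>F - p\<bar> + \<bar>G - p\<bar>) / P \<le> \<bar>F - p\<bar> + 1 / P"
  proof -
    have "(\<bar>F - p\<bar> + \<bar>G - p\<bar>) / P = \<bar>F - p\<bar> / P + \<bar>G - p\<bar> / P" by (simp add: add_divide_distrib)
    moreover have "\<bar>F - p\<bar> / P \<le> \<bar>F - p\<bar> / 1" using P by (intro divide_left_mono) auto
    moreover have "\<bar>G - p\<bar> / P \<le> 1 / P" using a1 P by (intro divide_right_mono) simp_all
    ultimately show ?thesis by linarith
  qed
  ultimately show ?thesis using b by linarith
qed

lemma alg1:
  fixes P F p V :: real
  assumes P: "P \<ge> 1" and V: "V = (F + (P - 1) * p) / P"
  shows "\<bar>V - p\<bar> \<le> \<bar>F - p\<bar>"
proof -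
  have e: "V - p = (F - p) / P" using V P by (simp add: field_simps)
  have "\<bar>V - p\<bar> = \<bar>F - p\<bar> / P" using e P by simp
  also have "\<dots> \<le> \<bar>F - p\<bar> / 1" using P by (intro divide_left_mono) auto
  finally show ?thesis by simp
qed

locale setting =
  fixes T :: "bool list set" and \<psi> :: "bool list \<Rightarrow> real" and D :: "bool list \<Rightarrow> (nat \<Rightarrow> bool) set"
  assumes pt: "pruned_tree T"
    and psi: "\<forall>t\<in>T. 0 < \<psi> t \<and> \<psi> t < 1"
    and comp: "compliant T D"
    and mD: "\<forall>t\<in>T. measure mu (cInt (D t)) = \<psi> t \<and> measure mu (cCl (D t)) = \<psi> t"
begin

abbreviation "K \<equiv> closed_offspring T D"

lemma piece_rel:
  assumes t: "t \<in> T" and a: "a \<in> Fl (length t)"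
  shows "rel K (stretch_list t @ a) = \<psi> t"
proof -
  have "rel K ((stretch_list t @ a) @ []) = rel (cCl (D t)) []"
    by (rule rel_conc[OF cCl_sets K_piece[OF t a]])
  also have "\<dots> = \<psi> t" using mD t M.prob_space by (simp add: rel_def)
  finally show ?thesis by simp
qed

lemma block_pos:
  assumes x: "x \<in> branches T" and k: "0 < k" "k \<le> n"
  shows "rel K (stretch_list (init x n) @ replicate k (x n)) =
    (rel K (stretch_list (init x (Suc n))) + (2 ^ (Suc n - k) - 1) * \<psi> (init x n)) / 2 ^ (Suc n - k)"
proof -
  define L where "L = Suc n - k"
  define p where "p = stretch_list (init x n) @ replicate k (x n)"
  define U where "U = {u::bool list. length u = L}"
  define u1 where "u1 = replicate L (x n)"
  have t: "init x n \<in> T" using x by (simp add: branches_def)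
  have pu1: "p @ u1 = stretch_list (init x (Suc n))"
    using k by (simp add: p_def u1_def L_def init_Suc stretch_list_snoc replicate_add[symmetric])
  have U: "finite U" "{u1} \<subseteq> U" by (simp_all add: U_def u1_def finite_list_length)
  have oth: "rel K (p @ u) = \<psi> (init x n)" if u: "u \<in> U - {u1}" for u
  proof -
    have "replicate k (x n) @ u \<in> Fl n"
      using u k by (intro Fl_mem) (auto simp: U_def u1_def L_def)
    then have "rel K (stretch_list (init x n) @ (replicate k (x n) @ u)) = \<psi> (init x n)"
      using piece_rel[OF t] by simp
    thus ?thesis by (simp add: p_def)
  qed
  have "rel K p = (\<Sum>u\<in>U. rel K (p @ u)) / 2 ^ L" unfolding U_def by (rule rel_split) simp
  also have "(\<Sum>u\<in>U. rel K (p @ u)) = rel K (p @ u1) + real (card U - 1) * \<psi> (init x n)"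
    using sum_special[OF U oth] by simp
  also have "real (card U - 1) = 2 ^ L - 1"
    using card_bool_lists[of L] by (simp add: U_def of_nat_diff)
  finally show ?thesis using pu1 unfolding p_def L_def by simp
qed

lemma block_zero:
  assumes x: "x \<in> branches T"
  shows "rel K (stretch_list (init x n)) =
    (rel K (stretch_list (init x (Suc n))) + rel K (stretch_list (init x n @ [\<not> x n]))
      + (2 ^ Suc n - 2) * \<psi> (init x n)) / 2 ^ Suc n"
proof -
  define L where "L = Suc n"
  define p where "p = stretch_list (init x n)"
  define U where "U = {u::bool list. length u = L}"
  define u1 where "u1 = replicate L (x n)"
  define u2 where "u2 = replicate L (\<not> x n)"
  have t: "init x n \<in> T" using x by (simp add: branches_def)
  have pu1: "p @ u1 = stretch_list (init x (Suc n))"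
    by (simp add: p_def u1_def L_def init_Suc stretch_list_snoc)
  have pu2: "p @ u2 = stretch_list (init x n @ [\<not> x n])"
    by (simp add: p_def u2_def L_def stretch_list_snoc)
  have ne: "u1 \<noteq> u2" by (simp add: u1_def u2_def L_def)
  have U: "finite U" "{u1, u2} \<subseteq> U" by (simp_all add: U_def u1_def u2_def finite_list_length)
  have oth: "rel K (p @ u) = \<psi> (init x n)" if u: "u \<in> U - {u1, u2}" for u
  proof -
    have "replicate 0 (x n) @ u \<in> Fl n"
      using u by (intro Fl_mem) (auto simp: U_def u1_def u2_def L_def)
    then have "rel K (stretch_list (init x n) @ u) = \<psi> (init x n)"
      using piece_rel[OF t] by simp
    thus ?thesis by (simp add: p_def)
  qed
  have "rel K p = (\<Sum>u\<in>U. rel K (p @ u)) / 2 ^ L" unfolding U_def by (rule rel_split) simp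
  also have "(\<Sum>u\<in>U. rel K (p @ u)) = (\<Sum>u\<in>{u1,u2}. rel K (p @ u)) + real (card U - card {u1, u2}) * \<psi> (init x n)"
    by (rule sum_special[OF U oth])
  also have "(\<Sum>u\<in>{u1,u2}. rel K (p @ u)) = rel K (p @ u1) + rel K (p @ u2)" using ne by simp
  also have "real (card U - card {u1, u2}) = 2 ^ L - 2"
  proof -
    have "card U = 2 ^ L" using card_bool_lists[of L] by (simp add: U_def)
    moreover have "(2::nat) \<le> 2 ^ L" by (simp add: L_def)
    ultimately show ?thesis using ne by (simp add: of_nat_diff)
  qed
  finally show ?thesis using pu1 pu2 unfolding p_def L_def by simp
qed

end

lemma conv_abstract:
  fixes V F a :: "nat \<Rightarrow> real"
  assumes FV: "\<And>n. F n = V (tr n)"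
    and bnd: "\<And>n k. k \<le> n \<Longrightarrow> \<bar>V (tr n + k) - a n\<bar> \<le> \<bar>F (Suc n) - a n\<bar> + (1/2)^n"
    and bndF: "\<And>n. \<bar>F n - a n\<bar> \<le> (1/2)^n"
  shows "V \<longlonglongrightarrow> l \<longleftrightarrow> a \<longlonglongrightarrow> l"
proof
  have g: "(\<lambda>n. (1/2::real)^n) \<longlonglongrightarrow> 0" by (rule LIMSEQ_power_zero) simp
  have Fa: "(\<lambda>n. F n - a n) \<longlonglongrightarrow> 0"
    by (rule Lim_null_comparison[OF _ g]) (simp add: bndF)
  {
    assume V: "V \<longlonglongrightarrow> l"
    have "(V \<circ> tr) \<longlonglongrightarrow> l" by (rule LIMSEQ_subseq_LIMSEQ[OF V tr_strict])
    moreover have "F = V \<circ> tr" by (rule ext) (simp add: FV)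
    ultimately have Fl: "F \<longlonglongrightarrow> l" by simp
    have "(\<lambda>n. F n - (F n - a n)) \<longlonglongrightarrow> l - 0" by (intro tendsto_diff Fl Fa)
    thus "a \<longlonglongrightarrow> l" by simp
  }
  {
    assume a: "a \<longlonglongrightarrow> l"
    have "(\<lambda>n. (F n - a n) + a n) \<longlonglongrightarrow> 0 + l" by (intro tendsto_add Fa a)
    then have Fl: "F \<longlonglongrightarrow> l" by simp
    define e where "e n = \<bar>F (Suc n) - l\<bar> + 2 * \<bar>a n - l\<bar> + (1/2)^n" for n
    have "e \<longlonglongrightarrow> \<bar>l - l\<bar> + 2 * \<bar>l - l\<bar> + 0"
      unfolding e_def by (intro tendsto_intros LIMSEQ_Suc[OF Fl] a g)
    then have e: "e \<longlonglongrightarrow> 0" by simp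
    obtain nn kk where nk: "\<And>m. kk m \<le> nn m \<and> m = tr (nn m) + kk m"
      using tr_decomp2 by metis
    have nnge: "N \<le> nn m" if "tr N \<le> m" for N m
    proof (rule ccontr)
      assume "\<not> N \<le> nn m"
      then have "tr (Suc (nn m)) \<le> tr N" by (intro tr_mono) simp
      moreover have "m < tr (Suc (nn m))" using nk[of m] by simp
      ultimately show False using that by simp
    qed
    have nnlim: "filterlim nn sequentially sequentially"
      unfolding filterlim_at_top eventually_sequentially using nnge by blast
    have enn: "(\<lambda>m. e (nn m)) \<longlonglongrightarrow> 0" by (rule filterlim_compose[OF e nnlim])
    have le: "\<bar>V m - l\<bar> \<le> e (nn m)" for m
    proof -
      let ?n = "nn m" and ?k = "kk m"
      have "\<bar>V m - a ?n\<bar> \<le> \<bar>F (Suc ?n) - a ?n\<bar> + (1/2)^?n" using bnd[of ?k ?n] nk[of m] by simp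
      moreover have "\<bar>V m - l\<bar> \<le> \<bar>V m - a ?n\<bar> + \<bar>a ?n - l\<bar>"
        using abs_triangle_ineq[of "V m - a ?n" "a ?n - l"] by simp
      moreover have "\<bar>F (Suc ?n) - a ?n\<bar> \<le> \<bar>F (Suc ?n) - l\<bar> + \<bar>a ?n - l\<bar>"
        using abs_triangle_ineq[of "F (Suc ?n) - l" "l - a ?n"] by (simp add: abs_minus_commute)
      ultimately show ?thesis unfolding e_def by linarith
    qed
    have "(\<lambda>m. V m - l) \<longlonglongrightarrow> 0"
      by (rule Lim_null_comparison[OF _ enn]) (simp add: le)
    thus "V \<longlonglongrightarrow> l" by (rule LIM_zero_cancel)
  }
qed

lemma decode:
  assumes "\<And>j k. j < n \<Longrightarrow> k \<le> j \<Longrightarrow> z (tr j + k) = z (tr j)"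
  shows "init z (tr n) = stretch_list (init (\<lambda>j. z (tr j)) n)"
proof (rule nth_equalityI)
  fix i assume "i < length (init z (tr n))"
  then have i: "i < tr n" by simp
  then obtain j k where jk: "j < n" "k \<le> j" "i = tr j + k" using tr_decomp by blast
  have "stretch_list (init (\<lambda>j. z (tr j)) n) ! i = z (tr j)"
    using jk nth_stretch_list[of j "init (\<lambda>j. z (tr j)) n" k] by simp
  thus "init z (tr n) ! i = stretch_list (init (\<lambda>j. z (tr j)) n) ! i"
    using i jk assms by simp
qed simp

context setting
begin

lemma K_sets': "K \<in> sets mu" by (rule K_sets)

lemma branch_conv:
  assumes x: "x \<in> branches T"
  shows "dens_seq K (stretch x) \<longlonglongrightarrow> l \<longleftrightarrow> (\<lambda>n. \<psi> (init x n)) \<longlonglongrightarrow> l"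
proof (rule conv_abstract)
  let ?V = "dens_seq K (stretch x)" and ?a = "\<lambda>n. \<psi> (init x n)"
  define F where "F n = ?V (tr n)" for n
  show "F n = ?V (tr n)" for n by (simp add: F_def)
  have Frel: "F n = rel K (stretch_list (init x n))" for n by (simp add: F_def dens_seq_rel init_stretch)
  have tT: "init x n \<in> T" for n using x by (simp add: branches_def)
  have a01: "0 \<le> ?a n" "?a n \<le> 1" for n using psi tT[of n] by auto
  have r01: "0 \<le> rel K s" "rel K s \<le> 1" for s using rel_nonneg rel_le1[OF K_sets'] by auto
  have z: "\<bar>F n - ?a n\<bar> \<le> 2 / 2 ^ Suc n \<and> \<bar>F n - ?a n\<bar> \<le> \<bar>F (Suc n) - ?a n\<bar> + 1 / 2 ^ Suc n" for n
  proof (rule alg0)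
    show "(2::real) \<le> 2 ^ Suc n" by simp
    show "F n = (F (Suc n) + rel K (stretch_list (init x n @ [\<not> x n])) + (2 ^ Suc n - 2) * ?a n) / 2 ^ Suc n"
      unfolding Frel by (rule block_zero[OF x])
  qed (use r01 a01 Frel in auto)
  have p1: "(2::real) / 2 ^ Suc n = (1/2)^n" for n by (simp add: power_one_over)
  have p2: "(1::real) / 2 ^ Suc n \<le> (1/2)^n" for n
  proof -
    have "(1::real) / 2 ^ Suc n \<le> 1 / 2 ^ n" by (rule divide_left_mono) auto
    thus ?thesis by (simp add: power_one_over)
  qed
  show "\<bar>F n - ?a n\<bar> \<le> (1/2)^n" for n using z[of n] p1[of n] by simp
  show "\<bar>?V (tr n + k) - ?a n\<bar> \<le> \<bar>F (Suc n) - ?a n\<bar> + (1/2)^n" if k: "k \<le> n" for n k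
  proof (cases "k = 0")
    case True
    thus ?thesis using z[of n] p2[of n] by (simp add: F_def)
  next
    case False
    have "?V (tr n + k) = rel K (stretch_list (init x n) @ replicate k (x n))"
      using k by (simp add: dens_seq_rel init_stretch2)
    also have "\<dots> = (F (Suc n) + (2 ^ (Suc n - k) - 1) * ?a n) / 2 ^ (Suc n - k)"
      using block_pos[OF x _ k] False Frel by simp
    finally have "\<bar>?V (tr n + k) - ?a n\<bar> \<le> \<bar>F (Suc n) - ?a n\<bar>" by (intro alg1) simp_all
    thus ?thesis by (simp add: add_increasing2)
  qed
qed

lemma zero_case:
  assumes s: "s \<notin> T" and z: "z \<in> cyl (stretch_list s)"
  shows "dens_seq K z \<longlonglongrightarrow> 0"
proof -
  let ?N = "tr (length s)"
  have "dens_seq K z (i + ?N) = 0" for i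
  proof -
    have "init z (?N + i) = stretch_list s @ init (shift ?N z) i"
      using z by (simp add: init_add cyl_iff)
    then have "cyl (init z (i + ?N)) \<subseteq> cyl (stretch_list s)" using cyl_app by (simp add: add.commute)
    then have "K \<inter> cyl (init z (i + ?N)) = {}" using K_empty[OF pt s, of D] by blast
    thus ?thesis by (simp add: dens_seq_rel rel_empty)
  qed
  then have "(\<lambda>i. dens_seq K z (i + ?N)) \<longlonglongrightarrow> 0" by simp
  thus ?thesis by (rule LIMSEQ_offset)
qed

lemma rel_Cl:
  assumes t: "t \<in> T"
  shows "rel (cCl (D t)) u = rel (D t) u"
proof -
  have Dt: "D t \<in> sets mu" using comp t by (simp add: compliant_def dualistic_def)
  let ?C = "cCl (D t)" and ?I = "cInt (D t)" and ?c = "cyl u"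
  have IC: "?I \<subseteq> ?C" by (rule order_trans[OF cInt_sub cCl_sup])
  have "measure mu (?C - ?I) = measure mu ?C - measure mu ?I"
    by (rule M.finite_measure_Diff) (simp_all add: IC)
  then have z: "measure mu (?C - ?I) = 0" using mD t by simp
  have "measure mu (?C \<inter> ?c) - measure mu (?I \<inter> ?c) = measure mu ((?C \<inter> ?c) - (?I \<inter> ?c))"
    by (rule M.finite_measure_Diff[symmetric]) (use IC in auto)
  also have "\<dots> \<le> measure mu (?C - ?I)" by (rule M.finite_measure_mono) auto
  finally have a: "measure mu (?C \<inter> ?c) \<le> measure mu (?I \<inter> ?c)" using z by simp
  have b: "measure mu (?I \<inter> ?c) \<le> measure mu (D t \<inter> ?c)"
    by (rule M.finite_measure_mono) (use cInt_sub Dt in auto)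
  have c: "measure mu (D t \<inter> ?c) \<le> measure mu (?C \<inter> ?c)"
    by (rule M.finite_measure_mono) (use cCl_sup in auto)
  show ?thesis using a b c by (simp add: rel_def)
qed

lemma piece_case:
  assumes t: "t \<in> T" and a: "a \<in> Fl (length t)" and z: "z \<in> cyl (stretch_list t @ a)"
  shows "\<exists>L\<in>{0,1}. dens_seq K z \<longlonglongrightarrow> L"
proof -
  let ?s = "stretch_list t @ a"
  define w where "w = shift (length ?s) z"
  have du: "dualistic (D t)" using comp t by (simp add: compliant_def)
  have eq: "dens_seq K z (i + length ?s) = dens_seq (D t) w i" for i
  proof -
    have "init z (length ?s + i) = ?s @ init w i"
      using z by (simp add: init_add cyl_iff w_def)
    then have "dens_seq K z (i + length ?s) = rel K (?s @ init w i)"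
      by (simp add: dens_seq_rel add.commute)
    also have "\<dots> = rel (cCl (D t)) (init w i)" by (rule rel_conc[OF cCl_sets K_piece[OF t a]])
    also have "\<dots> = dens_seq (D t) w i" by (simp add: rel_Cl[OF t] dens_seq_rel)
    finally show ?thesis .
  qed
  have "dens_seq (D t) w \<longlonglongrightarrow> dens (D t) w"
    using du by (simp add: dualistic_def dens_defined_def dens_def convergent_LIMSEQ_iff)
  moreover have "(\<lambda>i. dens_seq K z (i + length ?s)) = dens_seq (D t) w" by (rule ext) (rule eq)
  ultimately have "(\<lambda>i. dens_seq K z (i + length ?s)) \<longlonglongrightarrow> dens (D t) w" by (simp only:)
  then have "dens_seq K z \<longlonglongrightarrow> dens (D t) w" by (rule LIMSEQ_offset)
  moreover have "dens (D t) w \<in> {0,1}" using du by (simp add: dualistic_def)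
  ultimately show ?thesis by blast
qed

lemma nonbranch:
  assumes zS: "z \<notin> stretch ` branches T"
  shows "\<exists>L\<in>{0,1}. dens_seq K z \<longlonglongrightarrow> L"
proof -
  define x' where "x' = (\<lambda>j. z (tr j))"
  let ?P = "\<lambda>j. \<forall>k\<le>j. z (tr j + k) = z (tr j)"
  have zc: "\<exists>L\<in>{0,1}. dens_seq K z \<longlonglongrightarrow> L" if n: "\<forall>j<n. ?P j" and nT: "init x' n \<notin> T" for n
  proof -
    have "init z (tr n) = stretch_list (init x' n)" unfolding x'_def by (rule decode) (use n in auto)
    then have "z \<in> cyl (stretch_list (init x' n))" by (simp add: cyl_iff)
    thus ?thesis using zero_case[OF nT] by blast
  qed
  show ?thesis
  proof (cases "\<forall>j. ?P j")
    case True
    obtain n where n: "init z (tr n) \<notin> stretch_list ` T" using zS unfolding Sb_char by blast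
    have "init z (tr n) = stretch_list (init x' n)" unfolding x'_def by (rule decode) (use True in auto)
    then have "init x' n \<notin> T" using n by auto
    thus ?thesis using zc True by blast
  next
    case False
    define j0 where "j0 = (LEAST j. \<not> ?P j)"
    have nP: "\<not> ?P j0" unfolding j0_def by (rule LeastI_ex) (use False in blast)
    have Pb: "\<forall>j<j0. ?P j" unfolding j0_def using not_less_Least by blast
    show ?thesis
    proof (cases "init x' j0 \<in> T")
      case False thus ?thesis using zc Pb by blast
    next
      case True
      define a where "a = init (shift (tr j0) z) (Suc j0)"
      obtain k where k: "k \<le> j0" "z (tr j0 + k) \<noteq> z (tr j0)" using nP by blast
      have aF: "a \<in> Fl j0"
      proof -
        have "a \<noteq> replicate (Suc j0) b" for b
        proof
          assume "a = replicate (Suc j0) b"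
          then have "a ! k = b" "a ! 0 = b" using k by (simp_all del: replicate_Suc)
          moreover have "a ! k = z (tr j0 + k)" "a ! 0 = z (tr j0)" using k
            by (simp_all add: a_def shift_def add.commute)
          ultimately show False using k by simp
        qed
        thus ?thesis by (simp add: Fl_def a_def)
      qed
      have "init z (tr j0) = stretch_list (init x' j0)" unfolding x'_def by (rule decode) (use Pb in auto)
      then have "init z (tr j0 + Suc j0) = stretch_list (init x' j0) @ a"
        by (simp only: init_add a_def)
      then have "z \<in> cyl (stretch_list (init x' j0) @ a)" by (simp add: cyl_iff a_def)
      thus ?thesis using piece_case[OF True] aF by simp
    qed
  qed
qed

end

theorem theorem3p13:
  fixes T :: "bool list set" and \<psi> :: "bool list \<Rightarrow> real"
    and D :: "bool list \<Rightarrow> (nat \<Rightarrow> bool) set"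
  assumes "pruned_tree T"
    and "\<forall>t\<in>T. 0 < \<psi> t \<and> \<psi> t < 1"
    and "compliant T D"
    and "\<forall>t\<in>T. measure mu (cInt (D t)) = \<psi> t \<and> measure mu (cCl (D t)) = \<psi> t"
  shows "(\<forall>z. dens_seq (closed_offspring T D) z = dens_seq (open_offspring T D) z) \<and>
    (\<forall>z. z \<notin> stretch ` branches T \<longrightarrow>
        dens_defined (closed_offspring T D) z \<and> dens (closed_offspring T D) z \<in> {0, 1}) \<and>
    (\<forall>x\<in>branches T.
        (dens_defined (closed_offspring T D) (stretch x) \<longleftrightarrow> convergent (\<lambda>n. \<psi> (init x n))) \<and>
        (convergent (\<lambda>n. \<psi> (init x n)) \<longrightarrow>
           dens (closed_offspring T D) (stretch x) = lim (\<lambda>n. \<psi> (init x n))))"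
proof -
  interpret setting T \<psi> D using assms by unfold_locales auto
  have 1: "\<forall>z. dens_seq (closed_offspring T D) z = dens_seq (open_offspring T D) z"
    using dens_seq_KO[of T D] assms(4) by auto
  have 2: "dens_defined (closed_offspring T D) z \<and> dens (closed_offspring T D) z \<in> {0, 1}"
    if z: "z \<notin> stretch ` branches T" for z
  proof -
    obtain L where L: "L \<in> {0,1}" "dens_seq (closed_offspring T D) z \<longlonglongrightarrow> L" using nonbranch[OF z] by blast
    thus ?thesis unfolding dens_defined_def dens_def using limI convergentI by metis
  qed
  have 3: "(dens_defined (closed_offspring T D) (stretch x) \<longleftrightarrow> convergent (\<lambda>n. \<psi> (init x n))) \<and>
        (convergent (\<lambda>n. \<psi> (init x n)) \<longrightarrow>
           dens (closed_offspring T D) (stretch x) = lim (\<lambda>n. \<psi> (init x n)))"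
    if x: "x \<in> branches T" for x
  proof
    show "dens_defined (closed_offspring T D) (stretch x) \<longleftrightarrow> convergent (\<lambda>n. \<psi> (init x n))"
      unfolding dens_defined_def convergent_def using branch_conv[OF x] by blast
    show "convergent (\<lambda>n. \<psi> (init x n)) \<longrightarrow>
           dens (closed_offspring T D) (stretch x) = lim (\<lambda>n. \<psi> (init x n))"
    proof
      assume "convergent (\<lambda>n. \<psi> (init x n))"
      then have "(\<lambda>n. \<psi> (init x n)) \<longlonglongrightarrow> lim (\<lambda>n. \<psi> (init x n))" by (simp add: convergent_LIMSEQ_iff)
      then have "dens_seq (closed_offspring T D) (stretch x) \<longlonglongrightarrow> lim (\<lambda>n. \<psi> (init x n))"
        using branch_conv[OF x] by blast
      thus "dens (closed_offspring T D) (stretch x) = lim (\<lambda>n. \<psi> (init x n))"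
        unfolding dens_def by (rule limI)
    qed
  qed
  show ?thesis using 1 2 3 by blast
qed


end
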